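(* Let $f\in\mathcal{F}$ be a map that is not a real constant map, let $A$ be a finite subset of $E$, let $B$ be a finite subset of $\mathbb{C}$ and let $R>0$. Then for every $\varepsilon>0$ there exists $g\in\mathcal{F}(f,A)$ such that $d_{\mathcal{F}}(f,g)<\varepsilon$ and $g^{-1}(B)\cap D(0,R)\subset E$.
   Context: $\mathcal{F}$ is a Fréchet space of real and even entire maps (i.e. $f(\bar z)=\overline{f(z)}$ and $f(-z)=f(z)$) containing all real and even polynomial maps, whose topology is finer than the topology of local uniform convergence on $\mathbb{C}$; $(\|\cdot\|_j)_{j\ge0}$ is a sequence of seminorms defining its topology and $d_{\mathcal{F}}(f,g)=\sum_{j\ge0}2^{-j}\min\{1,\|f-g\|_j\}$. $E$ is a countable dense subset of $\mathbb{C}$, symmetric with respect to the real and imaginary axes, with $E\cap(\mathbb{R}\cup i\mathbb{R})$ dense in $\mathbb{R}\cup i\mathbb{R}$. For $f\in\mathcal{F}$ and $A\subseteq\mathbb{C}$, $\mathcal{F}(f,A)=\{g\in\mathcal{F}: g|_A=f|_A\text{ and } g'|_A=f'|_A\}$. $D(0,R)$ is the open disk of radius $R$ centered at $0$. *)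

theory Defs
  imports "HOL-Analysis.Analysis"
begin

definition real_even_entire :: "(complex \<Rightarrow> complex) \<Rightarrow> bool" where
  "real_even_entire f \<longleftrightarrow> f holomorphic_on UNIV \<and>
     (\<forall>z. f (cnj z) = cnj (f z)) \<and> (\<forall>z. f (- z) = f z)"

definition dF :: "(nat \<Rightarrow> (complex \<Rightarrow> complex) \<Rightarrow> real) \<Rightarrow>
                   (complex \<Rightarrow> complex) \<Rightarrow> (complex \<Rightarrow> complex) \<Rightarrow> real" where
  "dF nrm f g = (\<Sum>j. (1/2) ^ j * min 1 (nrm j (\<lambda>z. f z - g z)))"

text \<open>Standing assumptions: F is a Frechet space (real vector space of real even entire
  maps with a countable family of seminorms nrm, Hausdorff and complete for dF),
  containing all real even polynomials, whose topology is finer than local uniform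
  convergence on C.\<close>
definition frechet_setting :: "(complex \<Rightarrow> complex) set \<Rightarrow>
                               (nat \<Rightarrow> (complex \<Rightarrow> complex) \<Rightarrow> real) \<Rightarrow> bool" where
  "frechet_setting F nrm \<longleftrightarrow>
     (\<forall>f\<in>F. real_even_entire f) \<and>
     (\<lambda>z. 0) \<in> F \<and>
     (\<forall>f\<in>F. \<forall>g\<in>F. (\<lambda>z. f z + g z) \<in> F) \<and>
     (\<forall>f\<in>F. \<forall>c::real. (\<lambda>z. of_real c * f z) \<in> F) \<and>
     (\<forall>j. \<forall>f\<in>F. nrm j f \<ge> 0) \<and>
     (\<forall>j. \<forall>f\<in>F. \<forall>g\<in>F. nrm j (\<lambda>z. f z + g z) \<le> nrm j f + nrm j g) \<and>
     (\<forall>j. \<forall>f\<in>F. \<forall>c::real. nrm j (\<lambda>z. of_real c * f z) = \<bar>c\<bar> * nrm j f) \<and>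
     (\<forall>f\<in>F. (\<forall>j. nrm j f = 0) \<longrightarrow> f = (\<lambda>z. 0)) \<and>
     (\<forall>s. (\<forall>n. s n \<in> F) \<longrightarrow>
          (\<forall>e>0. \<exists>N. \<forall>m\<ge>N. \<forall>n\<ge>N. dF nrm (s m) (s n) < e) \<longrightarrow>
          (\<exists>g\<in>F. (\<lambda>n. dF nrm (s n) g) \<longlonglongrightarrow> 0)) \<and>
     (\<forall>(n::nat) (a::nat \<Rightarrow> real). (\<lambda>z. \<Sum>k\<le>n. of_real (a k) * z ^ (2 * k)) \<in> F) \<and>
     (\<forall>K. compact K \<longrightarrow> (\<exists>C N. \<forall>f\<in>F. \<forall>z\<in>K. norm (f z) \<le> C * (\<Sum>j\<le>N. nrm j f)))"

definition admissible_E :: "complex set \<Rightarrow> bool" where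
  "admissible_E E \<longleftrightarrow> countable E \<and> closure E = UNIV \<and>
     (\<forall>z\<in>E. cnj z \<in> E \<and> - cnj z \<in> E) \<and>
     {z. Im z = 0 \<or> Re z = 0} \<subseteq> closure (E \<inter> {z. Im z = 0 \<or> Re z = 0})"

definition F_fix :: "(complex \<Rightarrow> complex) set \<Rightarrow> (complex \<Rightarrow> complex) \<Rightarrow> complex set
                      \<Rightarrow> (complex \<Rightarrow> complex) set" where
  "F_fix F f A = {g\<in>F. \<forall>a\<in>A. g a = f a \<and> deriv g a = deriv f a}"

end

theory Submission imports Defs "HOL-Complex_Analysis.Complex_Analysis" "HOL-Computational_Algebra.Polynomial" begin

definition ep :: "real poly \<Rightarrow> complex \<Rightarrow> complex" where
  "ep q z = poly (map_poly of_real q) (z^2)"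

lemma ep_sum: "ep q = (\<lambda>z. \<Sum>k\<le>degree q. of_real (coeff q k) * z^(2*k))"
proof
  fix z
  have d: "degree (map_poly (of_real :: real \<Rightarrow> complex) q) = degree q"
    by (rule degree_map_poly) simp
  show "ep q z = (\<Sum>k\<le>degree q. of_real (coeff q k) * z^(2*k))"
    unfolding ep_def poly_altdef d by (simp add: coeff_map_poly power_mult)
qed

lemma mp_mult: "map_poly (of_real :: real \<Rightarrow> complex) (p * q) = map_poly of_real p * map_poly of_real q"
  by (rule poly_eqI) (simp add: coeff_mult coeff_map_poly)

lemma ep_mult: "ep (p * q) z = ep p z * ep q z"
  by (simp add: ep_def mp_mult)

lemma ep_one: "ep 1 z = 1"
  by (simp add: ep_def)

lemma ep_prod: "ep (\<Prod>s\<in>S. h s) z = (\<Prod>s\<in>S. ep (h s) z)"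
proof (cases "finite S")
  case True then show ?thesis
    by (induction S rule: finite_induct) (auto simp: ep_one ep_mult)
qed (simp add: ep_one)

lemma ep_lin: "ep [:c1, c2:] z = of_real c1 + of_real c2 * z^2"
  by (simp add: ep_def map_poly_pCons)

definition orb :: "complex \<Rightarrow> real poly" where
  "orb s = [: cmod s ^ 4, -2 * Re (s^2), 1 :]"

lemma ep_orb: "ep (orb s) z = (z^2 - s^2) * (z^2 - cnj (s^2))"
proof -
  have e1: "s^2 + cnj (s^2) = of_real (2 * Re (s^2))"
    by (rule complex_add_cnj)
  have e2: "s^2 * cnj (s^2) = of_real (cmod s ^ 4)"
  proof -
    have "s^2 * cnj (s^2) = of_real ((cmod (s^2))^2)" by (rule complex_norm_square[symmetric])
    also have "(cmod (s^2))^2 = cmod s ^ 4" by (simp add: norm_power flip: power_mult)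
    finally show ?thesis .
  qed
  have "(z^2 - s^2) * (z^2 - cnj (s^2)) = (z^2)^2 - (s^2 + cnj (s^2)) * z^2 + s^2 * cnj (s^2)"
    by (simp add: algebra_simps power2_eq_square)
  also have "\<dots> = ep (orb s) z"
    unfolding e1 e2 by (simp add: ep_def orb_def map_poly_pCons algebra_simps power2_eq_square)
  finally show ?thesis by simp
qed


section \<open>Algebra of F\<close>

lemma FS_ree: "frechet_setting F nrm \<Longrightarrow> h \<in> F \<Longrightarrow> real_even_entire h"
  by (simp add: frechet_setting_def)

lemma FS_holo: "frechet_setting F nrm \<Longrightarrow> h \<in> F \<Longrightarrow> h holomorphic_on UNIV"
  by (simp add: frechet_setting_def real_even_entire_def)

lemma FS_add: "frechet_setting F nrm \<Longrightarrow> h \<in> F \<Longrightarrow> k \<in> F \<Longrightarrow> (\<lambda>z. h z + k z) \<in> F"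
  by (simp add: frechet_setting_def)

lemma FS_scale: "frechet_setting F nrm \<Longrightarrow> h \<in> F \<Longrightarrow> (\<lambda>z. of_real c * h z) \<in> F"
  by (simp add: frechet_setting_def)

lemma FS_diff: "frechet_setting F nrm \<Longrightarrow> h \<in> F \<Longrightarrow> k \<in> F \<Longrightarrow> (\<lambda>z. h z - k z) \<in> F"
proof -
  assume a: "frechet_setting F nrm" "h \<in> F" "k \<in> F"
  have "(\<lambda>z. h z + of_real (-1) * k z) \<in> F"
    using a FS_add FS_scale by blast
  then show ?thesis by simp
qed

lemma FS_nonneg: "frechet_setting F nrm \<Longrightarrow> h \<in> F \<Longrightarrow> nrm j h \<ge> 0"
  by (simp add: frechet_setting_def)

lemma FS_tri: "frechet_setting F nrm \<Longrightarrow> h \<in> F \<Longrightarrow> k \<in> F \<Longrightarrow>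
    nrm j (\<lambda>z. h z + k z) \<le> nrm j h + nrm j k"
  by (simp add: frechet_setting_def)

lemma FS_nscale: "frechet_setting F nrm \<Longrightarrow> h \<in> F \<Longrightarrow>
    nrm j (\<lambda>z. of_real c * h z) = \<bar>c\<bar> * nrm j h"
  by (simp add: frechet_setting_def)

lemma FS_ep: "frechet_setting F nrm \<Longrightarrow> ep q \<in> F"
  unfolding ep_sum frechet_setting_def by blast

lemma FS_zero_nrm: "frechet_setting F nrm \<Longrightarrow> h \<in> F \<Longrightarrow> nrm j (\<lambda>z. 0) = 0"
proof -
  assume a: "frechet_setting F nrm" "h \<in> F"
  have "nrm j (\<lambda>z. of_real 0 * h z) = \<bar>0\<bar> * nrm j h"
    using FS_nscale[OF a] by blast
  then show ?thesis by simp
qed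

lemma FS_compact: "frechet_setting F nrm \<Longrightarrow> compact K \<Longrightarrow>
   \<exists>C N. \<forall>f\<in>F. \<forall>z\<in>K. norm (f z) \<le> C * (\<Sum>j\<le>N. nrm j f)"
  by (simp add: frechet_setting_def)

lemma ree_axis:
  assumes "real_even_entire h" "Re z = 0 \<or> Im z = 0"
  shows "Im (h z) = 0"
proof -
  have c: "h (cnj z) = cnj (h z)" and ev: "h (- z) = h z"
    using assms(1) by (auto simp: real_even_entire_def)
  show ?thesis
  proof (cases "Im z = 0")
    case True
    then have "cnj z = z" by (simp add: complex_eq_iff)
    then have "cnj (h z) = h z" using c by simp
    then show ?thesis by (metis cnj.simps(2) neg_equal_zero complex.sel(2))
  next
    case False
    then have "Re z = 0" using assms(2) by simp
    then have "cnj z = - z" by (simp add: complex_eq_iff)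
    then have "cnj (h z) = h z" using c ev by simp
    then show ?thesis by (metis cnj.simps(2) neg_equal_zero complex.sel(2))
  qed
qed

lemma ree_const_real:
  assumes "real_even_entire h" "h = (\<lambda>z. b)"
  shows "h = (\<lambda>z. of_real (Re b))"
proof -
  have "h (cnj 0) = cnj (h 0)" using assms(1) unfolding real_even_entire_def by blast
  then have "b = cnj b" using assms(2) by simp
  then have "Im b = 0" by (metis cnj.simps(2) neg_equal_zero complex.sel(2))
  then have "b = of_real (Re b)" by (simp add: complex_eq_iff)
  then show ?thesis using assms(2) by simp
qed


section \<open>The metric\<close>

lemma ds_summable:
  assumes "\<And>j. 0 \<le> a j"
  shows "summable (\<lambda>j. (1/2::real)^j * min 1 (a j))"
proof (rule summable_comparison_test[of _ "\<lambda>j. (1/2::real)^j"])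
  show "\<exists>N. \<forall>n\<ge>N. norm ((1/2::real)^n * min 1 (a n)) \<le> (1/2)^n"
    using assms by (auto simp: abs_mult intro!: mult_left_le)
  show "summable (\<lambda>j. (1/2::real)^j)" by (rule summable_geometric) simp
qed

lemma ds_nonneg:
  assumes "\<And>j. 0 \<le> a j"
  shows "0 \<le> (\<Sum>j. (1/2::real)^j * min 1 (a j))"
  by (rule suminf_nonneg[OF ds_summable[OF assms]]) (use assms in auto)

lemma ds_term:
  assumes "\<And>j. 0 \<le> a j"
  shows "(1/2::real)^j * min 1 (a j) \<le> (\<Sum>j. (1/2::real)^j * min 1 (a j))"
  using sum_le_suminf[OF ds_summable[OF assms], of "{j}"] assms by auto

lemma ds_tri:
  assumes "\<And>j. 0 \<le> a j" "\<And>j. 0 \<le> b j" "\<And>j. 0 \<le> c j" "\<And>j. a j \<le> b j + c j"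
  shows "(\<Sum>j. (1/2::real)^j * min 1 (a j)) \<le>
     (\<Sum>j. (1/2::real)^j * min 1 (b j)) + (\<Sum>j. (1/2::real)^j * min 1 (c j))"
proof -
  have "(\<Sum>j. (1/2::real)^j * min 1 (a j)) \<le> (\<Sum>j. (1/2::real)^j * min 1 (b j) + (1/2::real)^j * min 1 (c j))"
  proof (rule suminf_le)
    fix j
    have "min 1 (a j) \<le> min 1 (b j) + min 1 (c j)"
      using assms[of j] by linarith
    then show "(1/2::real)^j * min 1 (a j) \<le> (1/2::real)^j * min 1 (b j) + (1/2::real)^j * min 1 (c j)"
      by (simp flip: distrib_left)
  qed (use ds_summable assms in \<open>auto intro!: summable_add\<close>)
  also have "\<dots> = (\<Sum>j. (1/2::real)^j * min 1 (b j)) + (\<Sum>j. (1/2::real)^j * min 1 (c j))"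
    by (rule suminf_add[symmetric]) (use ds_summable assms in auto)
  finally show ?thesis .
qed

lemma ds_small:
  assumes "\<And>j. 0 \<le> X j" "\<eta> > 0"
  shows "\<exists>\<tau>>0. \<forall>a. (\<forall>j. 0 \<le> a j \<and> a j \<le> \<tau> * X j) \<longrightarrow> (\<Sum>j. (1/2::real)^j * min 1 (a j)) < \<eta>"
proof -
  obtain J where J: "(1/2::real)^J < \<eta>/4"
    using real_arch_pow_inv[of "\<eta>/4" "1/2"] assms(2) by auto
  define S where "S = (\<Sum>j<J. X j)"
  have S0: "S \<ge> 0" unfolding S_def using assms(1) by (simp add: sum_nonneg)
  define \<tau> where "\<tau> = \<eta> / (4 * (S + 1))"
  have tau: "\<tau> > 0" using S0 assms(2) by (simp add: \<tau>_def)
  show ?thesis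
  proof (intro exI[of _ \<tau>] conjI tau allI impI)
    fix a :: "nat \<Rightarrow> real" assume a: "\<forall>j. 0 \<le> a j \<and> a j \<le> \<tau> * X j"
    let ?t = "\<lambda>j. (1/2::real)^j * min 1 (a j)"
    have sm: "summable ?t" using ds_summable a by blast
    have "suminf ?t = (\<Sum>n. ?t (n + J)) + sum ?t {..<J}"
      by (rule suminf_split_initial_segment[OF sm])
    moreover have "(\<Sum>n. ?t (n + J)) \<le> (\<Sum>n. (1/2::real)^J * (1/2)^n)"
    proof (rule suminf_le)
      fix n show "?t (n + J) \<le> (1/2::real)^J * (1/2)^n"
        using a by (auto simp: power_add intro!: mult_left_le)
      show "summable (\<lambda>n. ?t (n + J))" using summable_ignore_initial_segment[OF sm, of J] by simp
      show "summable (\<lambda>n. (1/2::real)^J * (1/2)^n)"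
        by (rule summable_mult, rule summable_geometric) simp
    qed
    moreover have "(\<Sum>n. (1/2::real)^J * (1/2)^n) = (1/2)^J * 2"
      by (simp add: suminf_mult suminf_geometric)
    moreover have "sum ?t {..<J} \<le> sum (\<lambda>j. \<tau> * X j) {..<J}"
    proof (rule sum_mono)
      fix j
      have "?t j \<le> 1 * min 1 (a j)"
        using a by (intro mult_right_mono) (auto simp: power_le_one)
      also have "\<dots> \<le> \<tau> * X j" using a[rule_format, of j] by linarith
      finally show "?t j \<le> \<tau> * X j" .
    qed
    moreover have "sum (\<lambda>j. \<tau> * X j) {..<J} = \<tau> * S"
      by (simp add: S_def sum_distrib_left)
    moreover have "\<tau> * S < \<eta> / 4"
    proof -
      have "\<tau> * S \<le> \<tau> * (S + 1) - \<tau>" by (simp add: algebra_simps)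
      also have "\<tau> * (S + 1) = \<eta> / 4" using S0 unfolding \<tau>_def by (simp add: field_simps)
      finally show ?thesis using tau by linarith
    qed
    ultimately have "suminf ?t \<le> (1/2::real)^J * 2 + \<tau> * S"
      by linarith
    moreover have "(1/2::real)^J * 2 + \<tau> * S < \<eta>"
      using J \<open>\<tau> * S < \<eta> / 4\<close> assms(2) by linarith
    ultimately show "suminf ?t < \<eta>" by linarith
  qed
qed


lemma dF_nonneg: "frechet_setting F nrm \<Longrightarrow> f \<in> F \<Longrightarrow> g \<in> F \<Longrightarrow> 0 \<le> dF nrm f g"
proof -
  assume a: "frechet_setting F nrm" "f \<in> F" "g \<in> F"
  have hF: "(\<lambda>z. f z - g z) \<in> F" using FS_diff[OF a] .
  show ?thesis unfolding dF_def
    by (rule ds_nonneg[of "\<lambda>j. nrm j (\<lambda>z. f z - g z)"]) (rule FS_nonneg[OF a(1) hF])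
qed

lemma dF_self: "frechet_setting F nrm \<Longrightarrow> f \<in> F \<Longrightarrow> dF nrm f f = 0"
  unfolding dF_def using FS_zero_nrm[of F nrm f] by simp

lemma dF_tri:
  assumes FS: "frechet_setting F nrm" and "f \<in> F" "g \<in> F" "h \<in> F"
  shows "dF nrm f h \<le> dF nrm f g + dF nrm g h"
  unfolding dF_def
proof (rule ds_tri)
  fix j
  show "0 \<le> nrm j (\<lambda>z. f z - h z)" "0 \<le> nrm j (\<lambda>z. f z - g z)" "0 \<le> nrm j (\<lambda>z. g z - h z)"
    using FS_nonneg[OF FS FS_diff[OF FS assms(2,4)]] FS_nonneg[OF FS FS_diff[OF FS assms(2,3)]]
      FS_nonneg[OF FS FS_diff[OF FS assms(3,4)]] by auto
  have "nrm j (\<lambda>z. (f z - g z) + (g z - h z)) \<le> nrm j (\<lambda>z. f z - g z) + nrm j (\<lambda>z. g z - h z)"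
    by (rule FS_tri[OF FS]) (use assms FS_diff in auto)
  then show "nrm j (\<lambda>z. f z - h z) \<le> nrm j (\<lambda>z. f z - g z) + nrm j (\<lambda>z. g z - h z)"
    by simp
qed

lemma dF_close:
  assumes FS: "frechet_setting F nrm" and K: "compact K" and d: "\<delta> > 0"
  shows "\<exists>\<eta>>0. \<forall>f\<in>F. \<forall>g\<in>F. dF nrm f g < \<eta> \<longrightarrow> (\<forall>z\<in>K. norm (f z - g z) \<le> \<delta>)"
proof -
  obtain C N where CN: "\<forall>h\<in>F. \<forall>z\<in>K. norm (h z) \<le> C * (\<Sum>j\<le>N. nrm j h)"
    using FS_compact[OF FS K] by blast
  define C' where "C' = max C 0 + 1"
  have C'pos: "C' > 0" by (simp add: C'_def)
  define \<eta> where "\<eta> = min ((1/2)^N / 2) (\<delta> / (C' * (real N + 1) * 2^N))"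
  have etapos: "\<eta> > 0" using d C'pos by (simp add: \<eta>_def)
  show ?thesis
  proof (intro exI[of _ \<eta>] conjI etapos ballI impI)
    fix f g z assume fg: "f \<in> F" "g \<in> F" "dF nrm f g < \<eta>" and z: "z \<in> K"
    let ?h = "\<lambda>z. f z - g z"
    have hF: "?h \<in> F" using FS fg FS_diff by blast
    have nn: "\<And>j. 0 \<le> nrm j ?h" using FS_nonneg[OF FS hF] by blast
    have nj: "nrm j ?h \<le> 2^N * \<eta>" if "j \<le> N" for j
    proof -
      have t: "(1/2::real)^j * min 1 (nrm j ?h) < \<eta>"
        using ds_term[of "\<lambda>j. nrm j ?h" j, OF nn] fg(3) unfolding dF_def by linarith
      have pj: "(1/2::real)^N \<le> (1/2)^j" using that by (simp add: power_decreasing)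
      have "min 1 (nrm j ?h) < 2^j * \<eta>"
        using t by (simp add: field_simps power_divide)
      also have "2^j * \<eta> \<le> 2^N * \<eta>" using that etapos
        by (intro mult_right_mono) (auto simp: power_increasing)
      finally have m: "min 1 (nrm j ?h) < 2^N * \<eta>" .
      have "\<eta> \<le> (1/2)^N / 2" unfolding \<eta>_def by (rule min.cobounded1)
      then have "2^N * \<eta> \<le> 2^N * ((1/2)^N / 2)" by (intro mult_left_mono) auto
      also have "\<dots> = 1/2" by (simp add: power_divide)
      finally have "2^N * \<eta> \<le> 1/2" .
      with m show ?thesis by linarith
    qed
    have "(\<Sum>j\<le>N. nrm j ?h) \<le> (\<Sum>j\<le>N. 2^N * \<eta>)" by (rule sum_mono) (use nj in auto)
    also have "\<dots> = (real N + 1) * 2^N * \<eta>" by simp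
    finally have S: "(\<Sum>j\<le>N. nrm j ?h) \<le> (real N + 1) * 2^N * \<eta>" .
    have S0: "0 \<le> (\<Sum>j\<le>N. nrm j ?h)" using nn by (simp add: sum_nonneg)
    have "norm (?h z) \<le> C * (\<Sum>j\<le>N. nrm j ?h)" using CN[rule_format, OF hF z] by simp
    also have "\<dots> \<le> C' * (\<Sum>j\<le>N. nrm j ?h)" using S0 by (intro mult_right_mono) (auto simp: C'_def)
    also have "\<dots> \<le> C' * ((real N + 1) * 2^N * \<eta>)" using S C'pos by (intro mult_left_mono) auto
    also have "\<dots> \<le> C' * ((real N + 1) * 2^N * (\<delta> / (C' * (real N + 1) * 2^N)))"
      using C'pos min.cobounded2[of "(1/2)^N / 2" "\<delta> / (C' * (real N + 1) * 2^N)"]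
      by (intro mult_left_mono) (auto simp: \<eta>_def)
    also have "\<dots> = \<delta>" using C'pos by simp
    finally show "norm (f z - g z) \<le> \<delta>" .
  qed
qed


section \<open>Counting zeros\<close>

lemma div_zeros:
  assumes G: "G holomorphic_on UNIV" and T: "finite T" and z: "\<forall>t\<in>T. G t = 0"
  shows "\<exists>k. k holomorphic_on UNIV \<and> (\<forall>z. G z = (\<Prod>t\<in>T. (z - t)) * k z)"
  using T z
proof (induction T rule: finite_induct)
  case empty
  then show ?case using G by auto
next
  case (insert t T)
  then obtain k where k: "k holomorphic_on UNIV" "\<forall>z. G z = (\<Prod>t\<in>T. (z - t)) * k z" by auto
  have "(\<Prod>s\<in>T. (t - s)) \<noteq> 0" using insert(1,2) by auto
  moreover have "G t = 0" using insert(4) by auto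
  ultimately have kt: "k t = 0" using k(2) by auto
  define k1 where "k1 = (\<lambda>z. if z = t then deriv k t else (k z - k t) / (z - t))"
  have h1: "k1 holomorphic_on UNIV" unfolding k1_def by (rule pole_lemma_open[OF k(1)]) simp
  have kk: "\<forall>z. k z = (z - t) * k1 z" using kt by (auto simp: k1_def)
  have "\<forall>z. G z = (\<Prod>s\<in>insert t T. (z - s)) * k1 z"
  proof
    fix z
    have "G z = (\<Prod>t\<in>T. (z - t)) * ((z - t) * k1 z)" using k(2) kk by metis
    also have "\<dots> = (\<Prod>s\<in>insert t T. (z - s)) * k1 z"
      using insert(1,2) by (simp add: prod.insert mult.assoc mult.commute)
    finally show "G z = (\<Prod>s\<in>insert t T. (z - s)) * k1 z" .
  qed
  then show ?case using h1 by blast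
qed

lemma count_bound:
  fixes G :: "complex \<Rightarrow> complex"
  assumes G: "G holomorphic_on UNIV" and T: "finite T" and z: "\<forall>t\<in>T. G t = 0"
    and Tb: "T \<subseteq> cball 0 \<rho>" and \<zeta>: "norm \<zeta> \<le> \<rho>" and R2: "R2 > 3 * \<rho>" "\<rho> \<ge> 0"
    and M: "\<And>z. norm z = R2 \<Longrightarrow> norm (G z) \<le> M"
  shows "norm (G \<zeta>) \<le> M * (2 * \<rho> / (R2 - \<rho>)) ^ card T"
proof -
  obtain k where k: "k holomorphic_on UNIV" "\<forall>z. G z = (\<Prod>t\<in>T. (z - t)) * k z"
    using div_zeros[OF G T z] by blast
  let ?n = "card T"
  have pos: "R2 - \<rho> > 0" using R2 by linarith
  have kb: "norm (k z) \<le> M / (R2 - \<rho>) ^ ?n" if "norm z = R2" for z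
  proof -
    have "(\<Prod>t\<in>T. (R2 - \<rho>)) \<le> (\<Prod>t\<in>T. norm (z - t))"
    proof (rule prod_mono)
      fix t assume "t \<in> T"
      then have "norm t \<le> \<rho>" using Tb by auto
      moreover have "norm z - norm t \<le> norm (z - t)" by (rule norm_triangle_ineq2)
      ultimately show "0 \<le> R2 - \<rho> \<and> R2 - \<rho> \<le> norm (z - t)" using that pos by auto
    qed
    then have pl: "(R2 - \<rho>) ^ ?n \<le> norm (\<Prod>t\<in>T. (z - t))" by (simp add: prod_norm)
    have "norm (\<Prod>t\<in>T. (z - t)) * norm (k z) \<le> M" using M[OF that] k(2) by (simp add: norm_mult)
    then have "(R2 - \<rho>) ^ ?n * norm (k z) \<le> M"
      using pl by (meson mult_right_mono norm_ge_zero order_trans)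
    then show ?thesis using pos by (simp add: field_simps)
  qed
  have kz: "norm (k \<zeta>) \<le> M / (R2 - \<rho>) ^ ?n"
  proof (rule maximum_modulus_frontier[of k "cball 0 R2"])
    show "k holomorphic_on interior (cball 0 R2)" using k(1) by (rule holomorphic_on_subset) auto
    show "continuous_on (closure (cball 0 R2)) k"
      using k(1) holomorphic_on_imp_continuous_on continuous_on_subset by blast
    show "bounded (cball (0::complex) R2)" by simp
    show "\<And>z. z \<in> frontier (cball 0 R2) \<Longrightarrow> norm (k z) \<le> M / (R2 - \<rho>) ^ ?n"
      using kb pos R2 by (auto simp: frontier_cball)
    show "\<zeta> \<in> cball 0 R2" using \<zeta> R2 by auto
  qed
  have "(\<Prod>t\<in>T. norm (\<zeta> - t)) \<le> (\<Prod>t\<in>T. 2 * \<rho>)"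
  proof (rule prod_mono)
    fix t assume "t \<in> T"
    then have "norm t \<le> \<rho>" using Tb by auto
    moreover have "norm (\<zeta> - t) \<le> norm \<zeta> + norm t" by (rule norm_triangle_ineq4)
    ultimately show "0 \<le> norm (\<zeta> - t) \<and> norm (\<zeta> - t) \<le> 2 * \<rho>" using \<zeta> by auto
  qed
  then have pz: "norm (\<Prod>t\<in>T. (\<zeta> - t)) \<le> (2 * \<rho>) ^ ?n" by (simp add: prod_norm)
  have "norm (G \<zeta>) = norm (\<Prod>t\<in>T. (\<zeta> - t)) * norm (k \<zeta>)" using k(2) by (simp add: norm_mult)
  also have "\<dots> \<le> (2 * \<rho>) ^ ?n * (M / (R2 - \<rho>) ^ ?n)"
    using pz kz R2(2) by (intro mult_mono) auto
  also have "\<dots> = M * (2 * \<rho> / (R2 - \<rho>)) ^ ?n" by (simp add: power_divide)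
  finally show ?thesis .
qed


lemma zero_bound:
  assumes FS: "frechet_setting F nrm" and f: "f \<in> F" and ne: "f \<zeta> \<noteq> b" and R: "R > 0"
  shows "\<exists>K \<eta>. \<eta> > 0 \<and> (\<forall>g\<in>F. dF nrm f g < \<eta> \<longrightarrow>
            finite {z\<in>ball 0 R. g z = b} \<and> card {z\<in>ball 0 R. g z = b} \<le> K)"
proof -
  define \<rho> where "\<rho> = R + norm \<zeta>"
  define R2 where "R2 = 3 * \<rho> + 1"
  have n0: "0 \<le> norm \<zeta>" by simp
  have rho: "\<rho> > 0" "R \<le> \<rho>" "norm \<zeta> \<le> \<rho>" using R n0 unfolding \<rho>_def by linarith+
  have R2: "R2 > 3 * \<rho>" by (simp add: R2_def)
  define m0 where "m0 = norm (f \<zeta> - b)"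
  have m0: "m0 > 0" using ne by (simp add: m0_def)
  have fhol: "f holomorphic_on UNIV" using FS_holo[OF FS f] .
  have fc: "continuous_on (cball 0 R2) f"
    using fhol holomorphic_on_imp_continuous_on continuous_on_subset by blast
  have "compact ((\<lambda>z. f z - b) ` cball 0 R2)"
    by (rule compact_continuous_image) (use fc in \<open>auto intro!: continuous_intros\<close>)
  then obtain Mf where Mf: "\<forall>x\<in>(\<lambda>z. f z - b) ` cball 0 R2. norm x \<le> Mf"
    using compact_imp_bounded bounded_iff by metis
  define M where "M = max Mf 0 + 1"
  have M1: "M \<ge> 1" by (simp add: M_def)
  obtain \<eta> where eta: "\<eta> > 0" "\<forall>f\<in>F. \<forall>g\<in>F. dF nrm f g < \<eta> \<longrightarrow> (\<forall>z\<in>cball 0 R2. norm (f z - g z) \<le> min 1 (m0/2))"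
    using dF_close[OF FS compact_cball[of 0 R2], of "min 1 (m0/2)"] m0 by auto
  define r where "r = 2 * \<rho> / (R2 - \<rho>)"
  have r: "0 \<le> r" "r < 1" using rho by (auto simp: r_def R2_def field_simps)
  obtain K where K: "r ^ K < (m0/2) / M"
    using real_arch_pow_inv[of "(m0/2) / M" r] r m0 M1 by auto
  show ?thesis
  proof (intro exI[of _ K] exI[of _ \<eta>] conjI eta(1) ballI impI)
    fix g assume g: "g \<in> F" "dF nrm f g < \<eta>"
    have close: "\<forall>z\<in>cball 0 R2. norm (f z - g z) \<le> min 1 (m0/2)" using eta(2) f g by blast
    have gM: "norm (g z - b) \<le> M" if "norm z = R2" for z
    proof -
      have zc: "z \<in> cball 0 R2" using that by auto
      have e: "g z - b = (f z - b) - (f z - g z)" by simp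
      have "norm (g z - b) \<le> norm (f z - b) + norm (f z - g z)"
        unfolding e by (rule norm_triangle_ineq4)
      also have "\<dots> \<le> Mf + 1" using Mf zc close by (intro add_mono) auto
      finally show ?thesis by (simp add: M_def)
    qed
    have gz: "norm (g \<zeta> - b) \<ge> m0 / 2"
    proof -
      have "\<zeta> \<in> cball 0 R2" using rho R2 by auto
      then have "norm (f \<zeta> - g \<zeta>) \<le> m0 / 2" using close by auto
      moreover have "m0 \<le> norm (g \<zeta> - b) + norm (f \<zeta> - g \<zeta>)"
      proof -
        have e: "f \<zeta> - b = (g \<zeta> - b) + (f \<zeta> - g \<zeta>)" by simp
        show ?thesis unfolding m0_def e by (rule norm_triangle_ineq)
      qed
      ultimately show ?thesis by linarith
    qed
    have ghol: "(\<lambda>z. g z - b) holomorphic_on UNIV"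
      using FS_holo[OF FS g(1)] by (auto intro!: holomorphic_intros)
    have bd: "card T \<le> K" if T: "T \<subseteq> {z\<in>ball 0 R. g z = b}" "finite T" for T
    proof (rule ccontr)
      assume "\<not> card T \<le> K"
      then have rK: "r ^ card T \<le> r ^ K" using r by (intro power_decreasing) auto
      have "norm (g \<zeta> - b) \<le> M * r ^ card T"
        unfolding r_def
        by (rule count_bound[OF ghol T(2) _ _ rho(3) R2 _ gM]) (use T rho in auto)
      also have "\<dots> \<le> M * r ^ K" using rK M1 by simp
      also have "\<dots> < M * ((m0/2) / M)" using K M1 by (intro mult_strict_left_mono) auto
      also have "\<dots> = m0/2" using M1 by simp
      finally show False using gz by linarith
    qed
    show "finite {z\<in>ball 0 R. g z = b}" "card {z\<in>ball 0 R. g z = b} \<le> K"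
      using finite_if_finite_subsets_card_bdd[of "{z\<in>ball 0 R. g z = b}" K] bd by auto
  qed
qed


lemma Z_bound:
  assumes FS: "frechet_setting F nrm" and f: "f \<in> F" and nc: "\<forall>b. \<exists>\<zeta>. f \<zeta> \<noteq> b"
    and B: "finite B" and R: "R > 0"
  shows "\<exists>K \<eta>. \<eta> > 0 \<and> (\<forall>g\<in>F. dF nrm f g < \<eta> \<longrightarrow>
            finite (g -` B \<inter> ball 0 R) \<and> card (g -` B \<inter> ball 0 R) \<le> K)"
proof -
  have "\<forall>b\<in>B. \<exists>K \<eta>. \<eta> > 0 \<and> (\<forall>g\<in>F. dF nrm f g < \<eta> \<longrightarrow>
            finite {z\<in>ball 0 R. g z = b} \<and> card {z\<in>ball 0 R. g z = b} \<le> K)"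
  proof
    fix b
    obtain \<zeta> where "f \<zeta> \<noteq> b" using nc by blast
    then show "\<exists>K \<eta>. \<eta> > 0 \<and> (\<forall>g\<in>F. dF nrm f g < \<eta> \<longrightarrow>
            finite {z\<in>ball 0 R. g z = b} \<and> card {z\<in>ball 0 R. g z = b} \<le> K)"
      using zero_bound[OF FS f _ R] by blast
  qed
  then obtain Kf where "\<forall>b\<in>B. \<exists>\<eta>. \<eta> > 0 \<and> (\<forall>g\<in>F. dF nrm f g < \<eta> \<longrightarrow>
            finite {z\<in>ball 0 R. g z = b} \<and> card {z\<in>ball 0 R. g z = b} \<le> Kf b)"
    by (rule bchoice[THEN exE])
  then obtain \<eta>f where KE: "\<forall>b\<in>B. \<eta>f b > 0 \<and> (\<forall>g\<in>F. dF nrm f g < \<eta>f b \<longrightarrow>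
            finite {z\<in>ball 0 R. g z = b} \<and> card {z\<in>ball 0 R. g z = b} \<le> Kf b)"
    by (rule bchoice[THEN exE])
  define \<eta> where "\<eta> = Min (insert 1 (\<eta>f ` B))"
  have eta: "\<eta> > 0" unfolding \<eta>_def using B KE by (subst Min_gr_iff) auto
  have etab: "\<eta> \<le> \<eta>f b" if "b \<in> B" for b unfolding \<eta>_def using B that by (intro Min_le) auto
  show ?thesis
  proof (intro exI[of _ "\<Sum>b\<in>B. Kf b"] exI[of _ \<eta>] conjI eta ballI impI)
    fix g assume g: "g \<in> F" "dF nrm f g < \<eta>"
    have eq: "g -` B \<inter> ball 0 R = (\<Union>b\<in>B. {z\<in>ball 0 R. g z = b})" by auto
    have each: "finite {z\<in>ball 0 R. g z = b} \<and> card {z\<in>ball 0 R. g z = b} \<le> Kf b" if "b \<in> B" for b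
    proof -
      have "dF nrm f g < \<eta>f b" using g(2) etab[OF that] by linarith
      then show ?thesis using KE that g(1) by blast
    qed
    show "finite (g -` B \<inter> ball 0 R)" unfolding eq using B each by auto
    have "card (\<Union>b\<in>B. {z\<in>ball 0 R. g z = b}) \<le> (\<Sum>b\<in>B. card {z\<in>ball 0 R. g z = b})"
      by (rule card_UN_le[OF B])
    also have "\<dots> \<le> (\<Sum>b\<in>B. Kf b)" by (rule sum_mono) (use each in auto)
    finally show "card (g -` B \<inter> ball 0 R) \<le> (\<Sum>b\<in>B. Kf b)" unfolding eq .
  qed
qed


section \<open>The perturbation step\<close>

lemma E_sym:
  assumes "admissible_E E" "z \<in> E"
  shows "cnj z \<in> E" "- z \<in> E" "- cnj z \<in> E"
proof -
  have *: "\<forall>z\<in>E. cnj z \<in> E \<and> - cnj z \<in> E" using assms(1) by (simp add: admissible_E_def)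
  show "cnj z \<in> E" "- cnj z \<in> E" using * assms(2) by auto
  have "- cnj (cnj z) \<in> E" using * \<open>cnj z \<in> E\<close> by blast
  then show "- z \<in> E" by simp
qed

lemma ep_orb_nz:
  assumes "admissible_E E" "s \<in> E" "w \<notin> E"
  shows "ep (orb s) w \<noteq> 0"
proof
  assume "ep (orb s) w = 0"
  then have "w^2 = s^2 \<or> w^2 = (cnj s)^2" by (simp add: ep_orb)
  then have "w = s \<or> w = - s \<or> w = cnj s \<or> w = - cnj s" by (auto simp: power2_eq_iff)
  then show False using E_sym[OF assms(1,2)] assms(2,3) by auto
qed

lemma ep_prod_orb_zero:
  assumes "finite S" "s \<in> S"
  shows "ep (\<Prod>s\<in>S. orb s) s = 0"
  using assms by (auto simp: ep_prod ep_orb)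

lemma ep_prod_orb_nz:
  assumes "admissible_E E" "finite S" "S \<subseteq> E" "w \<notin> E"
  shows "ep (\<Prod>s\<in>S. orb s) w \<noteq> 0"
  using assms ep_orb_nz[OF assms(1) _ assms(4)] by (auto simp: ep_prod)

lemma ep_sq: "ep [:0, 1:] z = z^2"
  using ep_lin[of 0 1 z] by simp

lemma perturb_small:
  assumes FS: "frechet_setting F nrm" and g: "g \<in> F" and t: "t > 0"
  shows "\<exists>\<tau>>0. \<forall>c1 c2. \<bar>c1\<bar> \<le> \<tau> \<longrightarrow> \<bar>c2\<bar> \<le> \<tau> \<longrightarrow>
           dF nrm g (\<lambda>z. g z + ep (N * [:c1, c2:]) z) < t"
proof -
  define X where "X j = nrm j (ep N) + nrm j (ep (N * [:0, 1:]))" for j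
  have X0: "0 \<le> X j" for j unfolding X_def using FS_nonneg[OF FS FS_ep[OF FS]] by (simp add: add_nonneg_nonneg)
  obtain \<tau> where tau: "\<tau> > 0" "\<forall>a. (\<forall>j. 0 \<le> a j \<and> a j \<le> \<tau> * X j) \<longrightarrow> (\<Sum>j. (1/2::real)^j * min 1 (a j)) < t"
    using ds_small[of X t] X0 t by blast
  show ?thesis
  proof (intro exI[of _ \<tau>] conjI tau(1) allI impI)
    fix c1 c2 :: real assume c: "\<bar>c1\<bar> \<le> \<tau>" "\<bar>c2\<bar> \<le> \<tau>"
    have eq: "(\<lambda>z. g z - (g z + ep (N * [:c1, c2:]) z)) =
              (\<lambda>z. of_real (-c1) * ep N z + of_real (-c2) * ep (N * [:0, 1:]) z)"
      by (rule ext) (simp only: ep_mult ep_lin ep_sq, simp add: algebra_simps)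
    have h1: "(\<lambda>z. of_real (-c1) * ep N z) \<in> F" by (rule FS_scale[OF FS FS_ep[OF FS]])
    have h2: "(\<lambda>z. of_real (-c2) * ep (N * [:0, 1:]) z) \<in> F" by (rule FS_scale[OF FS FS_ep[OF FS]])
    have b: "0 \<le> nrm j (\<lambda>z. g z - (g z + ep (N * [:c1, c2:]) z)) \<and>
             nrm j (\<lambda>z. g z - (g z + ep (N * [:c1, c2:]) z)) \<le> \<tau> * X j" for j
    proof -
      have "nrm j (\<lambda>z. g z - (g z + ep (N * [:c1, c2:]) z))
          \<le> nrm j (\<lambda>z. of_real (-c1) * ep N z) + nrm j (\<lambda>z. of_real (-c2) * ep (N * [:0, 1:]) z)"
        unfolding eq by (rule FS_tri[OF FS h1 h2])
      also have "\<dots> = \<bar>c1\<bar> * nrm j (ep N) + \<bar>c2\<bar> * nrm j (ep (N * [:0, 1:]))"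
        using FS_nscale[OF FS FS_ep[OF FS], of j "-c1" N] FS_nscale[OF FS FS_ep[OF FS], of j "-c2" "N * [:0, 1:]"]
        by simp
      also have "\<dots> \<le> \<tau> * nrm j (ep N) + \<tau> * nrm j (ep (N * [:0, 1:]))"
        using c FS_nonneg[OF FS FS_ep[OF FS]] by (intro add_mono mult_right_mono) auto
      also have "\<dots> = \<tau> * X j" by (simp add: X_def algebra_simps)
      finally have "nrm j (\<lambda>z. g z - (g z + ep (N * [:c1, c2:]) z)) \<le> \<tau> * X j" .
      moreover have "0 \<le> nrm j (\<lambda>z. g z - (g z + ep (N * [:c1, c2:]) z))"
        unfolding eq by (rule FS_nonneg[OF FS FS_add[OF FS h1 h2]])
      ultimately show ?thesis by blast
    qed
    show "dF nrm g (\<lambda>z. g z + ep (N * [:c1, c2:]) z) < t"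
      unfolding dF_def by (rule tau(2)[rule_format]) (use b in blast)
  qed
qed

lemma deriv_sq_zero:
  assumes u: "u holomorphic_on UNIV" and v: "v holomorphic_on UNIV" and ua: "u a = 0"
  shows "((\<lambda>z. (u z)^2 * v z) has_field_derivative 0) (at a)"
proof -
  have du: "(u has_field_derivative deriv u a) (at a)"
    using u by (simp add: DERIV_deriv_iff_field_differentiable holomorphic_on_imp_differentiable_at)
  have dv: "(v has_field_derivative deriv v a) (at a)"
    using v by (simp add: DERIV_deriv_iff_field_differentiable holomorphic_on_imp_differentiable_at)
  have "((\<lambda>z. (u z)^2 * v z) has_field_derivative
          (u a)^2 * deriv v a + (of_nat 2 * (deriv u a * (u a)^(2 - Suc 0))) * v a) (at a)"
    by (rule DERIV_mult'[OF DERIV_power[OF du] dv])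
  then show ?thesis using ua by simp
qed


lemma choose_point:
  assumes FS: "frechet_setting F nrm" and adm: "admissible_E E"
    and gF: "g \<in> F" and NF: "Nf \<in> F" and Nw: "Nf w \<noteq> 0"
    and w: "w \<in> ball 0 R" and tau: "\<tau> > 0"
  shows "\<exists>e c1 c2. e \<in> E \<and> e \<in> ball 0 R \<and> Nf e \<noteq> 0 \<and> \<bar>c1\<bar> \<le> \<tau> \<and> \<bar>c2\<bar> \<le> \<tau> \<and>
            of_real c1 + of_real c2 * e^2 = (g w - g e) / Nf e"
proof -
  have gc: "isCont g x" for x
    using FS_holo[OF FS gF] by (metis continuous_on_eq_continuous_at holomorphic_on_imp_continuous_on open_UNIV UNIV_I)
  have Nc: "isCont Nf x" for x
    using FS_holo[OF FS NF] by (metis continuous_on_eq_continuous_at holomorphic_on_imp_continuous_on open_UNIV UNIV_I)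
  define cf where "cf e = (g w - g e) / Nf e" for e
  have cfc: "isCont cf w" unfolding cf_def using gc Nc Nw by (intro continuous_intros) auto
  have cf0: "cf w = 0" by (simp add: cf_def)
  obtain d2 where d2: "d2 > 0" "\<forall>y. dist w y < d2 \<longrightarrow> Nf y \<noteq> 0"
    using continuous_at_avoid[OF Nc Nw] by blast
  define d3 where "d3 = R - norm w"
  have d3: "d3 > 0" using w by (simp add: d3_def)
  have inball: "y \<in> ball 0 R" if "dist y w < d3" for y
  proof -
    have "norm y \<le> norm w + dist y w" by (metis dist_norm norm_triangle_sub add.commute)
    then show ?thesis using that by (simp add: d3_def)
  qed
  show ?thesis
  proof (cases "Re w = 0 \<or> Im w = 0")
    case True
    obtain d1 where d1: "d1 > 0" "\<forall>y. dist y w < d1 \<longrightarrow> dist (cf y) (cf w) < \<tau>"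
      using cfc tau unfolding continuous_at_eps_delta by blast
    have "w \<in> closure (E \<inter> {z. Im z = 0 \<or> Re z = 0})"
      using adm True unfolding admissible_E_def by blast
    then obtain e where e: "e \<in> E \<inter> {z. Im z = 0 \<or> Re z = 0}" "dist e w < min d1 (min d2 d3)"
      using d1(1) d2(1) d3 unfolding closure_approachable by (metis min_less_iff_conj)
    have ax: "Re e = 0 \<or> Im e = 0" using e(1) by auto
    have Ne: "Nf e \<noteq> 0" using d2(2) e(2) by (simp add: dist_commute)
    have i1: "Im (g w) = 0" using ree_axis[OF FS_ree[OF FS gF] True] .
    have i2: "Im (g e) = 0" using ree_axis[OF FS_ree[OF FS gF] ax] .
    have i3: "Im (Nf e) = 0" using ree_axis[OF FS_ree[OF FS NF] ax] .
    have real: "cf e = of_real (Re (cf e))"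
    proof -
      have "g w - g e = of_real (Re (g w - g e))" using i1 i2 by (simp add: complex_eq_iff)
      moreover have "Nf e = of_real (Re (Nf e))" using i3 by (simp add: complex_eq_iff)
      ultimately have "cf e = of_real (Re (g w - g e)) / of_real (Re (Nf e))"
        unfolding cf_def by metis
      also have "\<dots> = of_real (Re (g w - g e) / Re (Nf e))" by simp
      finally show ?thesis by simp
    qed
    have "norm (cf e) < \<tau>" using d1(2) e(2) cf0 by auto
    then have "\<bar>Re (cf e)\<bar> \<le> \<tau>" using abs_Re_le_cmod[of "cf e"] by linarith
    then show ?thesis
      using e Ne inball real
      by (intro exI[of _ e] exI[of _ "Re (cf e)"] exI[of _ 0]) (auto simp: cf_def)
  next
    case False
    have iw: "Im (w^2) \<noteq> 0" using False by (simp add: power2_eq_square)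
    define c2f where "c2f e = Im (cf e) / Im (e^2)" for e
    define c1f where "c1f e = Re (cf e) - c2f e * Re (e^2)" for e
    have c2c: "isCont c2f w" unfolding c2f_def using cfc iw by (intro continuous_intros) auto
    have c1c: "isCont c1f w" unfolding c1f_def using cfc c2c by (intro continuous_intros) auto
    have c20: "c2f w = 0" by (simp add: c2f_def cf0)
    have c10: "c1f w = 0" by (simp add: c1f_def c20 cf0)
    have imc: "isCont (\<lambda>e. Im (e^2)) w"
      by (simp add: continuous_intros)
    obtain d4 where d4: "d4 > 0" "\<forall>y. dist w y < d4 \<longrightarrow> Im (y^2) \<noteq> 0"
      using continuous_at_avoid[OF imc iw] by blast
    obtain d1 where d1: "d1 > 0" "\<forall>y. dist y w < d1 \<longrightarrow> dist (c1f y) (c1f w) < \<tau>"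
      using c1c tau unfolding continuous_at_eps_delta by blast
    obtain d5 where d5: "d5 > 0" "\<forall>y. dist y w < d5 \<longrightarrow> dist (c2f y) (c2f w) < \<tau>"
      using c2c tau unfolding continuous_at_eps_delta by blast
    have "w \<in> closure E" using adm unfolding admissible_E_def by simp
    then obtain e where e: "e \<in> E" "dist e w < min (min d1 d5) (min (min d2 d3) d4)"
      using d1(1) d2(1) d3 d4(1) d5(1) unfolding closure_approachable
      by (metis min_less_iff_conj)
    have Ne: "Nf e \<noteq> 0" using d2(2) e(2) by (simp add: dist_commute)
    have ie: "Im (e^2) \<noteq> 0" using d4(2) e(2) by (simp add: dist_commute)
    have b1: "\<bar>c1f e\<bar> \<le> \<tau>" using d1(2) e(2) c10 by (auto simp: dist_real_def)
    have b2: "\<bar>c2f e\<bar> \<le> \<tau>" using d5(2) e(2) c20 by (auto simp: dist_real_def)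
    have id: "of_real (c1f e) + of_real (c2f e) * e^2 = cf e"
      using ie by (simp add: complex_eq_iff c1f_def c2f_def field_simps)
    show ?thesis
      using e Ne inball b1 b2 id
      by (intro exI[of _ e] exI[of _ "c1f e"] exI[of _ "c2f e"]) (auto simp: cf_def)
  qed
qed


lemma step:
  assumes FS: "frechet_setting F nrm" and adm: "admissible_E E"
    and A: "finite A" and AE: "A \<subseteq> E" and g: "g \<in> F_fix F f A"
    and S: "finite S" and SE: "S \<subseteq> E" and w: "w \<in> ball 0 R" and wE: "w \<notin> E" and t: "t > 0"
  shows "\<exists>g' e. g' \<in> F_fix F f A \<and> dF nrm g g' < t \<and> (\<forall>s\<in>S. g' s = g s) \<and>
           e \<in> E \<and> e \<in> ball 0 R \<and> g' e = g w \<and> e \<notin> S"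
proof -
  have gF: "g \<in> F" and gA: "\<forall>a\<in>A. g a = f a \<and> deriv g a = deriv f a"
    using g by (auto simp: F_fix_def)
  define PS where "PS = (\<Prod>s\<in>S. orb s)"
  define PA where "PA = (\<Prod>a\<in>A. orb a)"
  define N where "N = PS * (PA * PA)"
  have epN: "ep N z = ep PS z * (ep PA z)^2" for z
    by (simp add: N_def ep_mult power2_eq_square)
  have Nw: "ep N w \<noteq> 0"
    unfolding epN PS_def PA_def using ep_prod_orb_nz[OF adm S SE wE] ep_prod_orb_nz[OF adm A AE wE] by simp
  obtain \<tau> where tau: "\<tau> > 0" "\<forall>c1 c2. \<bar>c1\<bar> \<le> \<tau> \<longrightarrow> \<bar>c2\<bar> \<le> \<tau> \<longrightarrow>
           dF nrm g (\<lambda>z. g z + ep (N * [:c1, c2:]) z) < t"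
    using perturb_small[OF FS gF t, of N] by blast
  obtain e c1 c2 where ec: "e \<in> E" "e \<in> ball 0 R" "ep N e \<noteq> 0" "\<bar>c1\<bar> \<le> \<tau>" "\<bar>c2\<bar> \<le> \<tau>"
      "of_real c1 + of_real c2 * e^2 = (g w - g e) / ep N e"
    using choose_point[OF FS adm gF FS_ep[OF FS] Nw w tau(1)] by blast
  define g' where "g' = (\<lambda>z. g z + ep (N * [:c1, c2:]) z)"
  have epL: "ep (N * [:c1, c2:]) z = ep N z * (of_real c1 + of_real c2 * z^2)" for z
    by (simp only: ep_mult ep_lin)
  have d: "dF nrm g g' < t" unfolding g'_def using tau(2) ec(4,5) by blast
  have PSz: "ep PS s = 0" if "s \<in> S" for s unfolding PS_def by (rule ep_prod_orb_zero[OF S that])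
  have PAz: "ep PA a = 0" if "a \<in> A" for a unfolding PA_def by (rule ep_prod_orb_zero[OF A that])
  have gs: "\<forall>s\<in>S. g' s = g s" unfolding g'_def epL epN using PSz by simp
  have ge: "g' e = g w" unfolding g'_def epL using ec(3,6) by simp
  have eS: "e \<notin> S" using PSz ec(3) epN by auto
  have g'F: "g' \<in> F" unfolding g'_def by (rule FS_add[OF FS gF FS_ep[OF FS]])
  have "\<forall>a\<in>A. g' a = f a \<and> deriv g' a = deriv f a"
  proof
    fix a assume a: "a \<in> A"
    have val: "g' a = f a" unfolding g'_def epL epN using gA a PAz[OF a] by simp
    have feq: "(\<lambda>z. ep (N * [:c1, c2:]) z) = (\<lambda>z. (ep PA z)^2 * ep (PS * [:c1, c2:]) z)"
      by (rule ext) (simp only: ep_mult epN, simp add: algebra_simps)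
    have pd: "((\<lambda>z. ep (N * [:c1, c2:]) z) has_field_derivative 0) (at a)"
      unfolding feq by (rule deriv_sq_zero[OF FS_holo[OF FS FS_ep[OF FS]] FS_holo[OF FS FS_ep[OF FS]] PAz[OF a]])
    have gd: "(g has_field_derivative deriv g a) (at a)"
      using FS_holo[OF FS gF]
      by (simp add: DERIV_deriv_iff_field_differentiable holomorphic_on_imp_differentiable_at)
    have "(g' has_field_derivative deriv g a + 0) (at a)"
      unfolding g'_def by (rule DERIV_add[OF gd pd])
    then have "deriv g' a = deriv g a" by (simp add: DERIV_imp_deriv)
    then show "g' a = f a \<and> deriv g' a = deriv f a" using val gA a by simp
  qed
  then have "g' \<in> F_fix F f A" using g'F by (simp add: F_fix_def)
  then show ?thesis using d gs ec(1,2) ge eS by blast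
qed


theorem lemma3p4:
  fixes F :: "(complex \<Rightarrow> complex) set"
    and nrm :: "nat \<Rightarrow> (complex \<Rightarrow> complex) \<Rightarrow> real"
    and E A B :: "complex set" and f :: "complex \<Rightarrow> complex" and R \<epsilon> :: real
  assumes "frechet_setting F nrm"
    and "admissible_E E"
    and "f \<in> F"
    and "\<not> (\<exists>c::real. f = (\<lambda>z. of_real c))"
    and "finite A" and "A \<subseteq> E"
    and "finite B"
    and "R > 0"
    and "\<epsilon> > 0"
  shows "\<exists>g\<in>F_fix F f A. dF nrm f g < \<epsilon> \<and> (g -` B) \<inter> ball 0 R \<subseteq> E"
proof -
  note FS = assms(1) and adm = assms(2) and fF = assms(3) and A = assms(5) and AE = assms(6)
    and B = assms(7) and R = assms(8) and eps = assms(9)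
  have nc: "\<forall>b. \<exists>\<zeta>. f \<zeta> \<noteq> b"
  proof
    fix b show "\<exists>\<zeta>. f \<zeta> \<noteq> b"
    proof (rule ccontr)
      assume "\<not> (\<exists>\<zeta>. f \<zeta> \<noteq> b)"
      then have "f = (\<lambda>z. b)" by auto
      then have "f = (\<lambda>z. of_real (Re b))" by (rule ree_const_real[OF FS_ree[OF FS fF]])
      then show False using assms(4) by blast
    qed
  qed
  obtain K \<eta>0 where K: "\<eta>0 > 0" "\<forall>g\<in>F. dF nrm f g < \<eta>0 \<longrightarrow>
            finite (g -` B \<inter> ball 0 R) \<and> card (g -` B \<inter> ball 0 R) \<le> K"
    using Z_bound[OF FS fF nc B R] by blast
  define \<eta> where "\<eta> = min \<eta>0 \<epsilon>"
  have eta: "\<eta> > 0" "\<eta> \<le> \<eta>0" "\<eta> \<le> \<epsilon>" using K(1) eps by (auto simp: \<eta>_def)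
  define Z where "Z g = g -` B \<inter> ball 0 R" for g :: "complex \<Rightarrow> complex"
  have Kp: "real K + 2 > 0" by simp
  have claim: "\<And>g. n = K - card (Z g \<inter> E) \<Longrightarrow> g \<in> F_fix F f A \<Longrightarrow> card (Z g \<inter> E) \<le> K \<Longrightarrow>
      dF nrm f g < \<eta> * (real (card (Z g \<inter> E)) + 1) / (real K + 2) \<Longrightarrow>
      \<exists>g'\<in>F_fix F f A. dF nrm f g' < \<epsilon> \<and> Z g' \<subseteq> E" for n
  proof (induction n rule: less_induct)
    case (less n)
    fix g assume n: "n = K - card (Z g \<inter> E)" and g: "g \<in> F_fix F f A"
      and cK: "card (Z g \<inter> E) \<le> K"
      and dg: "dF nrm f g < \<eta> * (real (card (Z g \<inter> E)) + 1) / (real K + 2)"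
    let ?c = "card (Z g \<inter> E)"
    have gF: "g \<in> F" using g by (simp add: F_fix_def)
    have "\<eta> * (real ?c + 1) / (real K + 2) \<le> \<eta> * (real K + 1) / (real K + 2)"
      using cK eta(1) Kp by (intro divide_right_mono mult_left_mono) auto
    also have "\<dots> < \<eta>" using eta(1) Kp by (simp add: field_simps)
    finally have dgl: "dF nrm f g < \<eta>" using dg by linarith
    have Zg: "finite (Z g)" using K(2) gF dgl eta(2) unfolding Z_def by auto
    show "\<exists>g'\<in>F_fix F f A. dF nrm f g' < \<epsilon> \<and> Z g' \<subseteq> E"
    proof (cases "Z g \<subseteq> E")
      case True
      have "dF nrm f g < \<epsilon>" using dgl eta(3) by linarith
      then show ?thesis using g True by blast
    next
      case False
      then obtain w where w: "w \<in> Z g" "w \<notin> E" by blast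
      have wb: "w \<in> ball 0 R" "g w \<in> B" using w(1) by (auto simp: Z_def)
      have t: "\<eta> / (real K + 2) > 0" using eta(1) Kp by simp
      obtain g' e where ge: "g' \<in> F_fix F f A" "dF nrm g g' < \<eta> / (real K + 2)"
        "\<forall>s\<in>Z g \<inter> E. g' s = g s" "e \<in> E" "e \<in> ball 0 R" "g' e = g w" "e \<notin> Z g \<inter> E"
        using step[OF FS adm A AE g _ _ wb(1) w(2) t, of "Z g \<inter> E"] Zg by blast
      have g'F: "g' \<in> F" using ge(1) by (simp add: F_fix_def)
      have "dF nrm f g' \<le> dF nrm f g + dF nrm g g'" by (rule dF_tri[OF FS fF gF g'F])
      also have "\<dots> < \<eta> * (real ?c + 1) / (real K + 2) + \<eta> / (real K + 2)"
        using dg ge(2) by linarith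
      also have "\<dots> = (\<eta> * (real ?c + 1) + \<eta>) / (real K + 2)" by (simp add: add_divide_distrib)
      also have "\<dots> = \<eta> * (real ?c + 2) / (real K + 2)" by (simp add: algebra_simps)
      finally have d': "dF nrm f g' < \<eta> * (real ?c + 2) / (real K + 2)" .
      have "\<eta> * (real ?c + 2) / (real K + 2) \<le> \<eta> * (real K + 2) / (real K + 2)"
        using cK eta(1) Kp by (intro divide_right_mono mult_left_mono) auto
      also have "\<dots> = \<eta>" using Kp by simp
      finally have "dF nrm f g' < \<eta>" using d' by linarith
      then have Zg': "finite (Z g')" "card (Z g') \<le> K"
        using K(2) g'F eta(2) unfolding Z_def by auto
      have sub: "insert e (Z g \<inter> E) \<subseteq> Z g' \<inter> E"
        using ge(3,4,5,6) wb(2) by (auto simp: Z_def)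
      have "card (insert e (Z g \<inter> E)) \<le> card (Z g' \<inter> E)"
        by (rule card_mono[OF _ sub]) (use Zg' in auto)
      then have c': "card (Z g' \<inter> E) \<ge> ?c + 1" using ge(7) Zg by simp
      have cK': "card (Z g' \<inter> E) \<le> K"
        using card_mono[of "Z g'" "Z g' \<inter> E"] Zg' by auto
      have "\<eta> * (real ?c + 2) / (real K + 2) \<le> \<eta> * (real (card (Z g' \<inter> E)) + 1) / (real K + 2)"
        using c' eta(1) Kp by (intro divide_right_mono mult_left_mono) auto
      then have d'': "dF nrm f g' < \<eta> * (real (card (Z g' \<inter> E)) + 1) / (real K + 2)"
        using d' by linarith
      have lt: "K - card (Z g' \<inter> E) < n" using n c' cK' cK by linarith
      show ?thesis by (rule less.IH[OF lt refl ge(1) cK' d''])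
    qed
  qed
  have fFix: "f \<in> F_fix F f A" using fF by (simp add: F_fix_def)
  have f0: "dF nrm f f = 0" by (rule dF_self[OF FS fF])
  have Zf: "finite (Z f)" "card (Z f) \<le> K" using K fF f0 unfolding Z_def by auto
  have cf: "card (Z f \<inter> E) \<le> K" using card_mono[of "Z f" "Z f \<inter> E"] Zf by auto
  have "0 < \<eta> * (real (card (Z f \<inter> E)) + 1) / (real K + 2)" using eta(1) Kp by simp
  then obtain g' where "g' \<in> F_fix F f A" "dF nrm f g' < \<epsilon>" "Z g' \<subseteq> E"
    using claim[OF refl fFix cf] f0 by auto
  then show ?thesis unfolding Z_def by blast
qed

end
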